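(* Let $\mathbf q^{CAV}=(q^{CAV}_1,\dots,q^{CAV}_R)$ be route flows with $q^{CAV}=\sum_rq^{CAV}_r>0$ and $\mathbf t^{CAV}=(t^{CAV}_1,\dots,t^{CAV}_R)$ the corresponding positive route travel times; let $t_{min}=\min_rt^{CAV}_r$, $t_{max}=\max_rt^{CAV}_r$ and $\overline{t^{CAV}}=\frac1{q^{CAV}}\sum_rq^{CAV}_rt^{CAV}_r$. Let $\gamma^F:I\to(0,\infty)$ be a measurable discount factor profile, and for an offer profile $T^{CAV}$ set $u^{HDV}_i=t_{min}$, $u^{CAV}_i=\gamma^F_iT^{CAV}_i$. (i) If there exists a feasible offer profile $T^{CAV}$ subject to $(\mathbf q^{CAV},\mathbf t^{CAV})$ with $u^{CAV}_i\le u^{HDV}_i$ for every $i$, then $\overline{t^{CAV}}\le t_{min}\,\mathbb E(1/\gamma^F)$. (ii) If $R=2$ and $t_{min}/t_{max}\le\gamma^F_i\le1$ for every $i$, then $\overline{t^{CAV}}\le t_{min}\,\mathbb E(1/\gamma^F)$ is also sufficient for the existence of such a feasible offer profile.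
   Context: Drivers form a measure space $(I,di)$ with total mass $|I|=q^{CAV}$ (interval with Lebesgue measure, or $\{1,\dots,q^{CAV}\}$ with counting measure). $\mathbb E(1/\gamma^F)=\frac1{|I|}\int_I\frac1{\gamma^F_i}\,di$. An offer profile subject to $(\mathbf q^{CAV},\mathbf t^{CAV})$ is a measurable $T^{CAV}:I\to[t_{min},t_{max}]$ with $\frac1{|I|}\int_IT^{CAV}_i\,di=\overline{t^{CAV}}$. An assignment plan inducing it is a measurable $\mu:I\times\{1,\dots,R\}\to[0,1]$ with $\int_I\mu(i,r)\,di=q^{CAV}_r$ for every $r$, $\sum_r\mu(i,r)=1$ and $\sum_rt^{CAV}_r\mu(i,r)=T^{CAV}_i$ for a.e. $i$; the profile is feasible if some assignment plan induces it. *)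

theory Defs
  imports "HOL-Analysis.Analysis"
begin

text \<open>Routes are indexed by 1..R; q r = route flow, t r = route travel time.\<close>

definition t_min :: "(nat \<Rightarrow> real) \<Rightarrow> nat \<Rightarrow> real" where
  "t_min t R = Min (t ` {1..R})"

definition t_max :: "(nat \<Rightarrow> real) \<Rightarrow> nat \<Rightarrow> real" where
  "t_max t R = Max (t ` {1..R})"

definition q_tot :: "(nat \<Rightarrow> real) \<Rightarrow> nat \<Rightarrow> real" where
  "q_tot q R = (\<Sum>r=1..R. q r)"

definition t_bar :: "(nat \<Rightarrow> real) \<Rightarrow> (nat \<Rightarrow> real) \<Rightarrow> nat \<Rightarrow> real" where
  "t_bar q t R = (\<Sum>r=1..R. q r * t r) / q_tot q R"

text \<open>E(1/gamma) as the normalized (possibly infinite) nonnegative integral.\<close>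
definition E_inv :: "'a measure \<Rightarrow> ('a \<Rightarrow> real) \<Rightarrow> ennreal" where
  "E_inv M \<gamma> = (\<integral>\<^sup>+ i. ennreal (1 / \<gamma> i) \<partial>M) / emeasure M (space M)"

definition offer_profile ::
  "'a measure \<Rightarrow> (nat \<Rightarrow> real) \<Rightarrow> (nat \<Rightarrow> real) \<Rightarrow> nat \<Rightarrow> ('a \<Rightarrow> real) \<Rightarrow> bool" where
  "offer_profile M q t R T \<longleftrightarrow>
     T \<in> borel_measurable M \<and>
     (\<forall>i\<in>space M. t_min t R \<le> T i \<and> T i \<le> t_max t R) \<and>
     (\<integral>i. T i \<partial>M) / measure M (space M) = t_bar q t R"

definition assignment_plan ::
  "'a measure \<Rightarrow> (nat \<Rightarrow> real) \<Rightarrow> (nat \<Rightarrow> real) \<Rightarrow> nat \<Rightarrow> ('a \<Rightarrow> real)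
     \<Rightarrow> ('a \<Rightarrow> nat \<Rightarrow> real) \<Rightarrow> bool" where
  "assignment_plan M q t R T \<mu> \<longleftrightarrow>
     (\<forall>r\<in>{1..R}. (\<lambda>i. \<mu> i r) \<in> borel_measurable M) \<and>
     (\<forall>i\<in>space M. \<forall>r\<in>{1..R}. 0 \<le> \<mu> i r \<and> \<mu> i r \<le> 1) \<and>
     (\<forall>r\<in>{1..R}. (\<integral>i. \<mu> i r \<partial>M) = q r) \<and>
     (AE i in M. (\<Sum>r=1..R. \<mu> i r) = 1 \<and> (\<Sum>r=1..R. t r * \<mu> i r) = T i)"

definition feasible_offer ::
  "'a measure \<Rightarrow> (nat \<Rightarrow> real) \<Rightarrow> (nat \<Rightarrow> real) \<Rightarrow> nat \<Rightarrow> ('a \<Rightarrow> real) \<Rightarrow> bool" where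
  "feasible_offer M q t R T \<longleftrightarrow>
     offer_profile M q t R T \<and> (\<exists>\<mu>. assignment_plan M q t R T \<mu>)"

end

theory Submission
  imports Defs
begin

lemma t_min_pos:
  assumes "R \<ge> 1" "\<forall>r\<in>{1..R}. 0 < t r"
  shows "0 < t_min t R"
  unfolding t_min_def using assms by (subst Min_gr_iff) auto

lemma t_min_le_max:
  assumes "R \<ge> 1"
  shows "t_min t R \<le> t_max t R"
  unfolding t_min_def t_max_def using assms
proof -
  have "Min (t ` {1..R}) \<le> t 1" using assms by (intro Min_le) auto
  also have "t 1 \<le> Max (t ` {1..R})" using assms by (intro Max_ge) auto
  finally show "Min (t ` {1..R}) \<le> Max (t ` {1..R})" .
qed

lemma t_bar_ge_min:
  assumes "\<forall>r\<in>{1..R}. 0 \<le> q r" "q_tot q R > 0"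
  shows "t_min t R \<le> t_bar q t R"
proof -
  have "(\<Sum>r=1..R. q r * t_min t R) \<le> (\<Sum>r=1..R. q r * t r)"
    apply (rule sum_mono)
    using assms unfolding t_min_def by (intro mult_left_mono) auto
  hence "t_min t R * q_tot q R \<le> (\<Sum>r=1..R. q r * t r)"
    unfolding q_tot_def by (simp add: sum_distrib_left mult.commute)
  thus ?thesis unfolding t_bar_def using assms(2) by (simp add: pos_le_divide_eq)
qed

lemma tmin2: "t_min t 2 = min (t 1) (t 2)"
proof -
  have "{1..2::nat} = {1,2}" by auto
  thus ?thesis unfolding t_min_def by simp
qed

lemma tmax2: "t_max t 2 = max (t 1) (t 2)"
proof -
  have "{1..2::nat} = {1,2}" by auto
  thus ?thesis unfolding t_max_def by simp
qed

lemma plan2: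
  fixes M :: "'a measure" and q t :: "nat \<Rightarrow> real" and T :: "'a \<Rightarrow> real"
  assumes fin: "finite_measure M" and measQ: "measure M (space M) = q 1 + q 2"
    and Qpos: "q 1 + q 2 > 0" and qnn: "0 \<le> q 1" "0 \<le> q 2"
    and Tm: "T \<in> borel_measurable M" and intT: "integrable M T"
    and Tb: "\<forall>i\<in>space M. min (t 1) (t 2) \<le> T i \<and> T i \<le> max (t 1) (t 2)"
    and IT: "(\<integral>i. T i \<partial>M) = q 1 * t 1 + q 2 * t 2"
  shows "\<exists>\<mu>. assignment_plan M q t 2 T \<mu>"
proof -
  define a where "a = t 1"
  define b where "b = t 2"
  define Q where "Q = q 1 + q 2"
  have r12: "{1..2::nat} = {1,2}" by auto
  show ?thesis
  proof (cases "a = b")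
    case True
    define \<mu> where "\<mu> = (\<lambda>(i::'a) (r::nat). q r / Q)"
    have Tc: "\<forall>i\<in>space M. T i = a" using Tb True a_def b_def by force
    have "assignment_plan M q t 2 T \<mu>"
      unfolding assignment_plan_def r12
    proof (intro conjI ballI)
      fix r assume "r \<in> {1::nat,2}"
      thus "(\<lambda>i. \<mu> i r) \<in> borel_measurable M" by (simp add: \<mu>_def)
      fix i
      show "0 \<le> \<mu> i r" using \<open>r \<in> {1,2}\<close> qnn Qpos by (auto simp: \<mu>_def Q_def)
      show "\<mu> i r \<le> 1" using \<open>r \<in> {1,2}\<close> qnn Qpos by (auto simp: \<mu>_def Q_def field_simps)
    next
      fix r assume "r \<in> {1::nat,2}"
      thus "(\<integral>i. \<mu> i r \<partial>M) = q r" using Qpos by (simp add: \<mu>_def measQ Q_def)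
    next
      show "AE i in M. (\<Sum>r\<in>{1,2}. \<mu> i r) = 1 \<and> (\<Sum>r\<in>{1,2}. t r * \<mu> i r) = T i"
      proof (intro AE_I2 conjI)
        fix i assume i: "i \<in> space M"
        have e: "q 1 / Q + q 2 / Q = 1" using Qpos by (simp add: Q_def add_divide_distrib[symmetric])
        thus "(\<Sum>r\<in>{1,2}. \<mu> i r) = 1" by (simp add: \<mu>_def)
        have "(\<Sum>r\<in>{1::nat,2}. t r * \<mu> i r) = a * (q 1 / Q + q 2 / Q)"
          using True by (simp add: \<mu>_def a_def b_def distrib_left)
        thus "(\<Sum>r\<in>{1,2}. t r * \<mu> i r) = T i" using e Tc i by simp
      qed
    qed
    thus ?thesis by blast
  next
    case False
    define \<mu> where "\<mu> = (\<lambda>(i::'a) (r::nat). if r = 1 then (T i - b) / (a - b) else (a - T i) / (a - b))"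
    have "assignment_plan M q t 2 T \<mu>"
      unfolding assignment_plan_def r12
    proof (intro conjI ballI)
      fix r assume "r \<in> {1::nat,2}"
      thus "(\<lambda>i. \<mu> i r) \<in> borel_measurable M" using Tm by (auto simp: \<mu>_def)
      fix i assume i: "i \<in> space M"
      have "min a b \<le> T i" "T i \<le> max a b" using Tb i a_def b_def by auto
      hence "0 \<le> \<mu> i r \<and> \<mu> i r \<le> 1" using False \<open>r \<in> {1,2}\<close>
        by (cases "a < b") (auto simp: \<mu>_def divide_simps)
      thus "0 \<le> \<mu> i r" "\<mu> i r \<le> 1" by auto
    next
      fix r assume r: "r \<in> {1::nat,2}"
      have ib: "integrable M (\<lambda>i. b)" "integrable M (\<lambda>i. a)" using fin
        by (auto intro: finite_measure.integrable_const)
      have aQ: "(\<integral>i. T i \<partial>M) - b * Q = q 1 * (a - b)" "a * Q - (\<integral>i. T i \<partial>M) = q 2 * (a - b)"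
        using IT by (auto simp: a_def b_def Q_def algebra_simps)
      show "(\<integral>i. \<mu> i r \<partial>M) = q r"
      proof (cases "r = 1")
        case True
        have "(\<integral>i. \<mu> i r \<partial>M) = (\<integral>i. T i - b \<partial>M) / (a - b)" using True by (simp add: \<mu>_def)
        also have "\<dots> = ((\<integral>i. T i \<partial>M) - b * Q) / (a - b)"
          using intT ib by (simp add: measQ Q_def mult.commute)
        finally show ?thesis using aQ False True by simp
      next
        case F: False
        hence r2: "r = 2" using r by auto
        have "(\<integral>i. \<mu> i r \<partial>M) = (\<integral>i. a - T i \<partial>M) / (a - b)" using r2 by (simp add: \<mu>_def)
        also have "\<dots> = (a * Q - (\<integral>i. T i \<partial>M)) / (a - b)"
          using intT ib by (simp add: measQ Q_def mult.commute)
        finally show ?thesis using aQ False r2 by simp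
      qed
    next
      show "AE i in M. (\<Sum>r\<in>{1,2}. \<mu> i r) = 1 \<and> (\<Sum>r\<in>{1,2}. t r * \<mu> i r) = T i"
      proof (intro AE_I2 conjI)
        fix i
        have ne: "a - b \<noteq> 0" using False by simp
        have "(T i - b) / (a - b) + (a - T i) / (a - b) = 1"
          using ne by (simp add: add_divide_distrib[symmetric])
        thus "(\<Sum>r\<in>{1,2}. \<mu> i r) = 1" by (simp add: \<mu>_def)
        have e1: "a * (T i - b) + b * (a - T i) = T i * (a - b)" by (simp add: algebra_simps)
        have "a * ((T i - b) / (a - b)) + b * ((a - T i) / (a - b)) = (a * (T i - b) + b * (a - T i)) / (a - b)"
          by (simp add: add_divide_distrib)
        also have "\<dots> = T i" using e1 ne by simp
        finally show "(\<Sum>r\<in>{1,2}. t r * \<mu> i r) = T i" by (simp add: \<mu>_def a_def b_def)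
      qed
    qed
    thus ?thesis by blast
  qed
qed

theorem proposition4:
  fixes M :: "'a measure" and q t :: "nat \<Rightarrow> real" and R :: nat
    and \<gamma> :: "'a \<Rightarrow> real"
  assumes q_nonneg: "\<forall>r\<in>{1..R}. 0 \<le> q r"
    and q_pos: "q_tot q R > 0"
    and t_pos: "\<forall>r\<in>{1..R}. 0 < t r"
    and mass: "emeasure M (space M) = ennreal (q_tot q R)"
    and \<gamma>_meas: "\<gamma> \<in> borel_measurable M"
    and \<gamma>_pos: "\<forall>i\<in>space M. 0 < \<gamma> i"
  shows
    "((\<exists>T. feasible_offer M q t R T \<and> (\<forall>i\<in>space M. \<gamma> i * T i \<le> t_min t R))
        \<longrightarrow> ennreal (t_bar q t R) \<le> ennreal (t_min t R) * E_inv M \<gamma>)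
     \<and>
     ((R = 2 \<and> (\<forall>i\<in>space M. t_min t R / t_max t R \<le> \<gamma> i \<and> \<gamma> i \<le> 1))
        \<longrightarrow> ennreal (t_bar q t R) \<le> ennreal (t_min t R) * E_inv M \<gamma>
        \<longrightarrow> (\<exists>T. feasible_offer M q t R T \<and> (\<forall>i\<in>space M. \<gamma> i * T i \<le> t_min t R)))"
proof -
  define Q where "Q = q_tot q R"
  define m where "m = t_min t R"
  define X where "X = t_max t R"
  have Qpos: "Q > 0" using q_pos Q_def by simp
  have R1: "R \<ge> 1"
  proof (rule ccontr)
    assume "\<not> R \<ge> 1" hence "R = 0" by simp
    thus False using q_pos by (simp add: q_tot_def)
  qed
  have mpos: "m > 0" using t_min_pos[OF R1 t_pos] m_def by simp
  have mX: "m \<le> X" using t_min_le_max[OF R1] m_def X_def by simp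
  have fin: "finite_measure M" using mass by (intro finite_measureI) auto
  have measQ: "measure M (space M) = Q" using mass Qpos Q_def by (simp add: measure_def)
  have tbm: "m \<le> t_bar q t R" using t_bar_ge_min[OF q_nonneg q_pos] m_def by simp
  have part1: "ennreal (t_bar q t R) \<le> ennreal m * E_inv M \<gamma>"
    if T: "feasible_offer M q t R T" "\<forall>i\<in>space M. \<gamma> i * T i \<le> m" for T
  proof -
    have Tm: "T \<in> borel_measurable M" and Tb: "\<forall>i\<in>space M. m \<le> T i \<and> T i \<le> X"
      and Tint: "(\<integral>i. T i \<partial>M) / Q = t_bar q t R"
      using T(1) unfolding feasible_offer_def offer_profile_def m_def X_def Q_def measQ[unfolded Q_def]
      by auto
    have "AE i in M. norm (T i) \<le> X"
      using Tb mpos by (intro AE_I2) force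
    hence intT: "integrable M T"
      using Tm by (intro finite_measure.integrable_const_bound[OF fin, where B=X]) auto
    have "ennreal (\<integral>i. T i \<partial>M) = (\<integral>\<^sup>+ i. ennreal (T i) \<partial>M)"
      using intT Tb mpos
      by (intro nn_integral_eq_integral[symmetric]) (auto intro!: AE_I2 order_trans[OF less_imp_le[OF mpos]])
    also have "\<dots> \<le> (\<integral>\<^sup>+ i. ennreal m * ennreal (1 / \<gamma> i) \<partial>M)"
    proof (rule nn_integral_mono)
      fix i assume i: "i \<in> space M"
      have "T i \<le> m * (1 / \<gamma> i)" using T(2) i \<gamma>_pos
        by (auto simp: field_simps mult.commute)
      thus "ennreal (T i) \<le> ennreal m * ennreal (1 / \<gamma> i)"
      proof -
        have "ennreal m * ennreal (1 / \<gamma> i) = ennreal (m * (1 / \<gamma> i))"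
          using mpos i \<gamma>_pos by (intro ennreal_mult[symmetric]) auto
        thus ?thesis using \<open>T i \<le> m * (1 / \<gamma> i)\<close> by (simp add: ennreal_leI)
      qed
    qed
    also have "\<dots> = ennreal m * (\<integral>\<^sup>+ i. ennreal (1 / \<gamma> i) \<partial>M)"
      using \<gamma>_meas by (intro nn_integral_cmult) auto
    finally have A: "ennreal (\<integral>i. T i \<partial>M) \<le> ennreal m * (\<integral>\<^sup>+ i. ennreal (1 / \<gamma> i) \<partial>M)" .
    have "0 \<le> (\<integral>i. T i \<partial>M)"
      using Tb mpos by (intro integral_nonneg_AE AE_I2) (auto intro: order_trans[OF less_imp_le[OF mpos]])
    hence "ennreal (t_bar q t R) = ennreal (\<integral>i. T i \<partial>M) / ennreal Q"
      using Tint Qpos by (simp add: divide_ennreal)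
    also have "\<dots> \<le> ennreal m * (\<integral>\<^sup>+ i. ennreal (1 / \<gamma> i) \<partial>M) / ennreal Q"
      by (rule divide_right_mono_ennreal[OF A])
    also have "\<dots> = ennreal m * E_inv M \<gamma>"
      unfolding E_inv_def mass Q_def by (simp add: ennreal_times_divide)
    finally show ?thesis .
  qed
  have part2: "\<exists>T. feasible_offer M q t R T \<and> (\<forall>i\<in>space M. \<gamma> i * T i \<le> m)"
    if R2: "R = 2" and g: "\<forall>i\<in>space M. m / X \<le> \<gamma> i \<and> \<gamma> i \<le> 1"
      and h: "ennreal (t_bar q t R) \<le> ennreal m * E_inv M \<gamma>"
  proof -
    define tb where "tb = t_bar q t R"
    have Xpos: "X > 0" using mpos mX by simp
    have gb: "m \<le> m / \<gamma> i \<and> m / \<gamma> i \<le> X" if i: "i \<in> space M" for i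
    proof -
      have gi: "0 < \<gamma> i" "\<gamma> i \<le> 1" "m / X \<le> \<gamma> i" using g \<gamma>_pos i by auto
      have "m \<le> X * \<gamma> i" using gi(3) Xpos by (simp add: divide_simps mult.commute)
      thus ?thesis using gi mpos by (simp add: divide_simps mult.commute)
    qed
    have gm: "(\<lambda>i. 1 / \<gamma> i) \<in> borel_measurable M" using \<gamma>_meas by measurable
    have "AE i in M. norm (1 / \<gamma> i) \<le> X / m"
    proof (intro AE_I2)
      fix i assume i: "i \<in> space M"
      have "m * (1 / \<gamma> i) \<le> X" using gb[OF i] by simp
      hence "1 / \<gamma> i \<le> X / m" using mpos by (simp add: divide_simps mult.commute)
      moreover have "\<bar>\<gamma> i\<bar> = \<gamma> i" using \<gamma>_pos i by force
      ultimately show "norm (1 / \<gamma> i) \<le> X / m" by simp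
    qed
    hence intg: "integrable M (\<lambda>i. 1 / \<gamma> i)"
      using gm by (intro finite_measure.integrable_const_bound[OF fin, where B="X/m"]) auto
    define J where "J = (\<integral>i. 1 / \<gamma> i \<partial>M)"
    have J0: "0 \<le> J" unfolding J_def using \<gamma>_pos by (intro integral_nonneg_AE AE_I2) auto
    have "(\<integral>\<^sup>+ i. ennreal (1 / \<gamma> i) \<partial>M) = ennreal J"
      unfolding J_def using intg \<gamma>_pos by (intro nn_integral_eq_integral AE_I2) auto
    hence "E_inv M \<gamma> = ennreal (J / Q)"
      unfolding E_inv_def mass Q_def[symmetric] using J0 Qpos by (simp add: divide_ennreal)
    moreover have "ennreal m * ennreal (J / Q) = ennreal (m * (J / Q))"
      using mpos J0 Qpos by (intro ennreal_mult[symmetric]) auto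
    ultimately have "ennreal tb \<le> ennreal (m * (J / Q))"
      using h tb_def by simp
    hence tbJ: "tb \<le> m * (J / Q)" using mpos J0 Qpos by (simp add: ennreal_le_iff)
    define D where "D = m * J - m * Q"
    have tbQ: "tb * Q \<le> m * J" using tbJ Qpos by (simp add: field_simps)
    have tbm': "m * Q \<le> tb * Q" using tbm tb_def Qpos by simp
    define lam where "lam = (if D = 0 then 0 else (tb * Q - m * Q) / D)"
    have lam01: "0 \<le> lam" "lam \<le> 1" using tbQ tbm' by (auto simp: lam_def D_def divide_simps)
    have lamD: "lam * D = tb * Q - m * Q" using tbQ tbm' by (auto simp: lam_def D_def)
    define T where "T = (\<lambda>i. (m - lam * m) + (lam * m) * (1 / \<gamma> i))"
    have Tm: "T \<in> borel_measurable M" unfolding T_def using gm by measurable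
    have Tb: "m \<le> T i \<and> T i \<le> m / \<gamma> i" if i: "i \<in> space M" for i
    proof -
      have "T i = m + lam * (m / \<gamma> i - m)" by (simp add: T_def algebra_simps)
      moreover have "0 \<le> m / \<gamma> i - m" using gb[OF i] by simp
      moreover have "lam * (m / \<gamma> i - m) \<le> 1 * (m / \<gamma> i - m)"
        using lam01 \<open>0 \<le> m / \<gamma> i - m\<close> by (intro mult_right_mono) auto
      moreover have "0 \<le> lam * (m / \<gamma> i - m)"
        using lam01 \<open>0 \<le> m / \<gamma> i - m\<close> by simp
      ultimately show ?thesis by simp
    qed
    have intc: "\<And>c. integrable M (\<lambda>i. c::real)" using fin by (auto intro: finite_measure.integrable_const)
    have intT: "integrable M T" unfolding T_def
      by (intro Bochner_Integration.integrable_add intc integrable_mult_right intg)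
    have IT: "(\<integral>i. T i \<partial>M) = tb * Q"
    proof -
      have "(\<integral>i. T i \<partial>M) = (m - lam * m) * Q + lam * m * J"
        unfolding T_def J_def
        by (subst Bochner_Integration.integral_add[OF intc integrable_mult_right[OF intg]],
            subst integral_mult_right_zero) (simp add: measQ)
      also have "\<dots> = m * Q + lam * D" by (simp add: D_def algebra_simps)
      finally show ?thesis using lamD by simp
    qed
    have TX: "\<forall>i\<in>space M. m \<le> T i \<and> T i \<le> X"
    proof
      fix i assume i: "i \<in> space M"
      show "m \<le> T i \<and> T i \<le> X" using Tb[OF i] gb[OF i] by linarith
    qed
    have "(\<integral>i. T i \<partial>M) / measure M (space M) = tb" using IT Qpos measQ by simp
    hence off: "offer_profile M q t R T"
      unfolding offer_profile_def using Tm TX by (simp add: m_def X_def tb_def)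
    have "\<exists>\<mu>. assignment_plan M q t 2 T \<mu>"
    proof (rule plan2[OF fin _ _ _ _ Tm intT])
      have Q2: "Q = q 1 + q 2" unfolding Q_def q_tot_def R2 by (simp add: numeral_2_eq_2)
      show "measure M (space M) = q 1 + q 2" using measQ Q2 by simp
      show "0 < q 1 + q 2" using Qpos Q2 by simp
      show "0 \<le> q 1" "0 \<le> q 2" using q_nonneg R2 by auto
      show "\<forall>i\<in>space M. min (t 1) (t 2) \<le> T i \<and> T i \<le> max (t 1) (t 2)"
        using TX m_def X_def R2 tmin2 tmax2 by simp
      have "tb * Q = (\<Sum>r=1..R. q r * t r)" unfolding tb_def t_bar_def Q_def using q_pos by simp
      thus "(\<integral>i. T i \<partial>M) = q 1 * t 1 + q 2 * t 2" using IT R2 by (simp add: numeral_2_eq_2)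
    qed
    moreover have "\<forall>i\<in>space M. \<gamma> i * T i \<le> m"
    proof
      fix i assume i: "i \<in> space M"
      thus "\<gamma> i * T i \<le> m" using Tb[OF i] \<gamma>_pos by (simp add: divide_simps mult.commute)
    qed
    ultimately show ?thesis using off R2 unfolding feasible_offer_def by auto
  qed
  show ?thesis using part1 part2 unfolding m_def X_def by blast
qed

end
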